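(* Let $n\ge 3$ be odd and consider the path $P_n$ with vertices $u_1,\dots,u_n$ and edges $\{u_j,u_{j+1}\}$, $1\le j\le n-1$. Let $\alpha\neq0$ be real, give the edge $\{u_1,u_2\}$ weight $1/\alpha$ and all other edges weight $1$. If $|\alpha|>\sqrt{(n-1)/2}$, then the end vertex $u_1$ is sedentary.
   Context: For a weighted graph with weighted adjacency matrix $A$ (entries equal to edge weights, $0$ for non-adjacent pairs), the transition matrix is $U(t)=e^{itA}$. A vertex $u$ is sedentary if $\inf_{t>0}|U(t)_{u,u}|\ge C$ for some constant $0<C\le1$. *)

theory Defs
  imports Complex_Main "Jordan_Normal_Form.Matrix"
begin

text \<open>Weighted path P_n: vertex u_(j+1) is index j (0-based), so u_1 is index 0.
  Edge {u_1,u_2} has weight 1/alpha, other path edges weight 1, non-edges 0.\<close>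
definition path_adj :: "nat \<Rightarrow> real \<Rightarrow> complex mat" where
  "path_adj n \<alpha> = mat n n (\<lambda>(i,j).
     if (i = 0 \<and> j = 1) \<or> (i = 1 \<and> j = 0) then complex_of_real (1 / \<alpha>)
     else if i + 1 = j \<or> j + 1 = i then 1 else 0)"

definition transition :: "complex mat \<Rightarrow> real \<Rightarrow> complex mat" where
  "transition A t = mat (dim_row A) (dim_col A) (\<lambda>(i,j).
     \<Sum>k. ((\<i> * complex_of_real t) ^ k / of_nat (fact k)) * (A ^\<^sub>m k) $$ (i,j))"

definition sedentary :: "complex mat \<Rightarrow> nat \<Rightarrow> bool" where
  "sedentary A u \<longleftrightarrow> (\<exists>C::real. 0 < C \<and> C \<le> 1 \<and>
     (INF t\<in>{0<..}. cmod (transition A t $$ (u,u))) \<ge> C)"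

end

theory Submission imports Defs "HOL-Analysis.Analysis" begin

primrec itv :: "(nat\<Rightarrow>nat\<Rightarrow>complex) \<Rightarrow> nat \<Rightarrow> (nat\<Rightarrow>complex) \<Rightarrow> nat \<Rightarrow> nat \<Rightarrow> complex" where
  "itv a n x 0 = x"
| "itv a n x (Suc k) = (\<lambda>i. \<Sum>j<n. a i j * itv a n x k j)"

definition cf :: "(nat\<Rightarrow>nat\<Rightarrow>complex) \<Rightarrow> nat \<Rightarrow> (nat\<Rightarrow>complex) \<Rightarrow> nat \<Rightarrow> nat \<Rightarrow> complex" where
  "cf a n x i k = (\<i>^k / of_nat (fact k)) * itv a n x k i"

definition FF :: "(nat\<Rightarrow>nat\<Rightarrow>complex) \<Rightarrow> nat \<Rightarrow> (nat\<Rightarrow>complex) \<Rightarrow> nat \<Rightarrow> complex \<Rightarrow> complex" where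
  "FF a n x i s = (\<Sum>k. cf a n x i k * s^k)"

lemma itv_bound:
  "(\<Sum>i<n. cmod (itv a n x k i)) \<le> (\<Sum>i<n. \<Sum>j<n. cmod (a i j))^k * (\<Sum>i<n. cmod (x i))"
proof (induction k)
  case 0 then show ?case by simp
next
  case (Suc k)
  define K where "K = (\<Sum>i<n. \<Sum>j<n. cmod (a i j))"
  define L where "L = (\<Sum>i<n. cmod (itv a n x k i))"
  have Kn: "K \<ge> 0" unfolding K_def by (intro sum_nonneg) auto
  have yl: "cmod (itv a n x k j) \<le> L" if "j < n" for j
    unfolding L_def using that by (intro member_le_sum) auto
  have "(\<Sum>i<n. cmod (itv a n x (Suc k) i)) \<le> (\<Sum>i<n. \<Sum>j<n. cmod (a i j) * cmod (itv a n x k j))"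
    by (auto intro!: sum_mono order.trans[OF norm_sum] simp: norm_mult)
  also have "\<dots> \<le> (\<Sum>i<n. \<Sum>j<n. cmod (a i j) * L)"
    by (intro sum_mono mult_left_mono yl) auto
  also have "\<dots> = K * L" unfolding K_def by (simp add: sum_distrib_right)
  also have "\<dots> \<le> K * (K^k * (\<Sum>i<n. cmod (x i)))"
    using Suc.IH Kn unfolding K_def L_def by (intro mult_left_mono) auto
  finally show ?case unfolding K_def by (simp add: mult.assoc)
qed

lemma cf_summable:
  assumes "i < n"
  shows "summable (\<lambda>k. cf a n x i k * s^k)"
proof -
  define K where "K = (\<Sum>i<n. \<Sum>j<n. cmod (a i j))"
  define L0 where "L0 = (\<Sum>i<n. cmod (x i))"
  have b: "cmod (itv a n x k i) \<le> K^k * L0" for k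
    using order.trans[OF member_le_sum[of i "{..<n}" "\<lambda>i. cmod (itv a n x k i)"] itv_bound] assms
    unfolding K_def L0_def by auto
  have s: "summable (\<lambda>k. L0 * (inverse (fact k) * (K * cmod s)^k))"
    by (intro summable_mult summable_exp)
  show ?thesis
  proof (rule summable_comparison_test'[OF s])
    fix k
    have "cmod (cf a n x i k * s^k) = cmod (itv a n x k i) * cmod s ^ k / fact k"
      unfolding cf_def by (simp add: norm_mult norm_divide norm_power)
    also have "\<dots> \<le> K^k * L0 * cmod s ^ k / fact k"
      by (intro divide_right_mono mult_right_mono b) auto
    also have "\<dots> = L0 * (inverse (fact k) * (K * cmod s)^k)"
      by (simp add: field_simps power_mult_distrib)
    finally show "norm (cf a n x i k * s^k) \<le> L0 * (inverse (fact k) * (K * cmod s)^k)" .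
  qed
qed

lemma diffs_cf:
  "diffs (cf a n x i) k = \<i> * (\<Sum>j<n. a i j * cf a n x j k)"
proof -
  have e: "(fact (Suc k)::complex) = of_nat (Suc k) * fact k" by (rule fact_Suc)
  have nz: "(of_nat (Suc k)::complex) \<noteq> 0" by (rule of_nat_neq_0)
  have "diffs (cf a n x i) k = of_nat (Suc k) * (\<i> * \<i>^k / (of_nat (Suc k) * fact k))
         * (\<Sum>j<n. a i j * itv a n x k j)"
    unfolding diffs_def cf_def by (simp only: itv.simps of_nat_fact e power_Suc mult.assoc)
  also have "of_nat (Suc k) * (\<i> * \<i>^k / (of_nat (Suc k) * fact k)) = \<i> * (\<i>^k / fact k)"
    using nz by (simp del: of_nat_Suc)
  finally show ?thesis unfolding cf_def by (simp add: sum_distrib_left mult_ac)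
qed

lemma FF_deriv:
  assumes "i < n"
  shows "(FF a n x i has_field_derivative \<i> * (\<Sum>j<n. a i j * FF a n x j s)) (at s)"
proof -
  have d: "((\<lambda>s. \<Sum>k. cf a n x i k * s^k) has_field_derivative (\<Sum>k. diffs (cf a n x i) k * s^k)) (at s)"
    by (rule termdiffs_strong_converges_everywhere) (rule cf_summable[OF assms])
  have "(\<Sum>k. diffs (cf a n x i) k * s^k) = (\<Sum>k. \<i> * (\<Sum>j<n. a i j * (cf a n x j k * s^k)))"
    by (simp add: diffs_cf sum_distrib_left sum_distrib_right mult.assoc)
  also have "\<dots> = \<i> * (\<Sum>k. (\<Sum>j<n. a i j * (cf a n x j k * s^k)))"
    by (intro suminf_mult summable_sum summable_mult cf_summable) auto
  also have "\<dots> = \<i> * (\<Sum>j<n. (\<Sum>k. a i j * (cf a n x j k * s^k)))"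
    by (subst suminf_sum) (auto intro!: summable_mult cf_summable)
  also have "\<dots> = \<i> * (\<Sum>j<n. a i j * FF a n x j s)"
    unfolding FF_def by (intro arg_cong[where f="(*) \<i>"] sum.cong refl suminf_mult cf_summable) auto
  finally show ?thesis using d unfolding FF_def[abs_def] by simp
qed

lemma FF_zero: "FF a n x i 0 = x i"
  unfolding FF_def using powser_zero[of "cf a n x i"] by (simp add: cf_def)

lemma FF_norm:
  assumes sym: "\<And>i j. i < n \<Longrightarrow> j < n \<Longrightarrow> a i j = a j i"
    and re: "\<And>i j. i < n \<Longrightarrow> j < n \<Longrightarrow> cnj (a i j) = a i j"
  shows "(\<Sum>i<n. cnj (FF a n x i (of_real t)) * FF a n x i (of_real t)) = (\<Sum>i<n. cnj (x i) * x i)"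
proof -
  define G where "G i t = FF a n x i (of_real t)" for i t
  define h where "h t = (\<Sum>i<n. cnj (G i t) * G i t)" for t
  have hd: "(h has_derivative (\<lambda>_. 0)) (at t within UNIV)" for t
  proof -
    define D where "D i = \<i> * (\<Sum>j<n. a i j * G j t)" for i
    have gd: "(G i has_vector_derivative D i) (at t)" if "i < n" for i
      unfolding G_def D_def by (rule has_vector_derivative_real_field[OF FF_deriv[OF that]])
    have "(h has_vector_derivative (\<Sum>i<n. cnj (G i t) * D i + cnj (D i) * G i t)) (at t)"
      unfolding h_def by (intro has_vector_derivative_sum has_vector_derivative_mult has_vector_derivative_cnj gd) auto
    moreover have "(\<Sum>i<n. cnj (G i t) * D i + cnj (D i) * G i t) = 0"
    proof -
      have c: "cnj (D i) = - \<i> * (\<Sum>j<n. a i j * cnj (G j t))" if "i < n" for i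
        unfolding D_def using re that by (simp add: cnj_sum)
      have s1: "(\<Sum>i<n. cnj (G i t) * D i) = \<i> * (\<Sum>i<n. \<Sum>j<n. a i j * cnj (G i t) * G j t)"
        unfolding D_def by (simp add: sum_distrib_left mult_ac)
      have "(\<Sum>i<n. cnj (D i) * G i t) = (\<Sum>i<n. (- \<i> * (\<Sum>j<n. a i j * cnj (G j t))) * G i t)"
        by (rule sum.cong) (auto simp: c)
      also have "\<dots> = - \<i> * (\<Sum>i<n. \<Sum>j<n. a i j * cnj (G j t) * G i t)"
        by (simp add: sum_distrib_left sum_distrib_right mult_ac)
      also have "(\<Sum>i<n. \<Sum>j<n. a i j * cnj (G j t) * G i t) = (\<Sum>j<n. \<Sum>i<n. a i j * cnj (G j t) * G i t)"
        by (rule sum.swap)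
      also have "\<dots> = (\<Sum>i<n. \<Sum>j<n. a i j * cnj (G i t) * G j t)"
        using sym by (intro sum.cong refl) auto
      finally have s2: "(\<Sum>i<n. cnj (D i) * G i t) = - \<i> * (\<Sum>i<n. \<Sum>j<n. a i j * cnj (G i t) * G j t)" .
      show ?thesis by (simp add: sum.distrib s1 s2)
    qed
    ultimately show ?thesis by (simp add: has_vector_derivative_def)
  qed
  obtain c where "\<forall>x\<in>UNIV. h x = c"
    using has_derivative_zero_constant[OF convex_UNIV hd] by blast
  then have "h t = h 0" by simp
  then show ?thesis unfolding h_def G_def by (simp add: FF_zero)
qed

lemma itv_lin:
  "itv a n (\<lambda>i. c * x i + y i) k i = c * itv a n x k i + itv a n y k i"
proof (induction k arbitrary: i)
  case 0 then show ?case by simp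
next
  case (Suc k) then show ?case by (simp add: sum.distrib sum_distrib_left algebra_simps)
qed

lemma FF_lin:
  assumes "i < n"
  shows "FF a n (\<lambda>i. c * x i + y i) i s = c * FF a n x i s + FF a n y i s"
proof -
  have "FF a n (\<lambda>i. c * x i + y i) i s = (\<Sum>k. c * (cf a n x i k * s^k) + cf a n y i k * s^k)"
    unfolding FF_def cf_def itv_lin by (simp add: algebra_simps)
  also have "\<dots> = (\<Sum>k. c * (cf a n x i k * s^k)) + (\<Sum>k. cf a n y i k * s^k)"
    by (intro suminf_add[symmetric] summable_mult cf_summable assms)
  also have "\<dots> = c * FF a n x i s + FF a n y i s"
    unfolding FF_def by (simp add: suminf_mult cf_summable assms)
  finally show ?thesis .
qed

lemma FF_orth:
  assumes vA: "\<And>j. j < n \<Longrightarrow> (\<Sum>i<n. v i * a i j) = 0"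
    and vw: "(\<Sum>i<n. v i * w i) = 0"
  shows "(\<Sum>i<n. v i * FF a n w i s) = 0"
proof -
  have z: "(\<Sum>i<n. v i * itv a n w k i) = 0" for k
  proof (cases k)
    case 0 then show ?thesis using vw by simp
  next
    case (Suc m)
    have "(\<Sum>i<n. v i * itv a n w k i) = (\<Sum>i<n. \<Sum>j<n. v i * a i j * itv a n w m j)"
      by (simp add: Suc sum_distrib_left mult.assoc)
    also have "\<dots> = (\<Sum>j<n. (\<Sum>i<n. v i * a i j) * itv a n w m j)"
      by (subst sum.swap) (simp add: sum_distrib_right)
    also have "\<dots> = 0" using vA by simp
    finally show ?thesis .
  qed
  have "(\<Sum>i<n. v i * FF a n w i s) = (\<Sum>i<n. \<Sum>k. v i * (cf a n w i k * s^k))"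
    unfolding FF_def by (intro sum.cong refl suminf_mult[symmetric] cf_summable) auto
  also have "\<dots> = (\<Sum>k. \<Sum>i<n. v i * (cf a n w i k * s^k))"
    by (rule suminf_sum[symmetric]) (auto intro!: summable_mult cf_summable)
  also have "\<dots> = (\<Sum>k. (\<i>^k / of_nat (fact k) * s^k) * (\<Sum>i<n. v i * itv a n w k i))"
    unfolding cf_def by (simp add: sum_distrib_left mult_ac)
  also have "\<dots> = 0" by (simp add: z)
  finally show ?thesis .
qed

lemma FF_null:
  assumes null: "\<And>i. i < n \<Longrightarrow> (\<Sum>j<n. a i j * v j) = 0" and "i < n"
  shows "FF a n v i s = v i"
proof -
  have z: "itv a n v (Suc k) i = 0" if "i < n" for k i
    using that
  proof (induction k arbitrary: i)
    case 0 then show ?case using null by simp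
  next
    case (Suc k) then show ?case by simp
  qed
  have "(\<lambda>k. cf a n v i k * s^k) = (\<lambda>k. if k = 0 then v i else 0)"
  proof
    fix k show "cf a n v i k * s^k = (if k = 0 then v i else 0)"
      using z[OF assms(2)] by (cases k) (auto simp: cf_def)
  qed
  then show ?thesis unfolding FF_def using sums_unique[OF sums_single[of 0 "\<lambda>_. v i"]] by simp
qed

lemma key:
  fixes vr :: "nat \<Rightarrow> real"
  assumes sym: "\<And>i j. i < n \<Longrightarrow> j < n \<Longrightarrow> a i j = a j i"
    and re: "\<And>i j. i < n \<Longrightarrow> j < n \<Longrightarrow> cnj (a i j) = a i j"
    and n0: "0 < n"
    and null: "\<And>i. i < n \<Longrightarrow> (\<Sum>j<n. a i j * of_real (vr j)) = 0"
    and v0: "vr 0 = 1"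
  shows "cmod (FF a n (\<lambda>i. if i = 0 then 1 else 0) 0 (of_real t)) \<ge> 2 / (\<Sum>i<n. (vr i)^2) - 1"
proof -
  define N where "N = (\<Sum>i<n. (vr i)^2)"
  define d :: "nat \<Rightarrow> real" where "d i = (if i = 0 then 1 else 0)" for i
  define wr where "wr i = d i - vr i / N" for i
  define v where "v i = complex_of_real (vr i)" for i
  define w where "w i = complex_of_real (wr i)" for i
  define G where "G i = FF a n w i (of_real t)" for i
  have "(vr 0)^2 \<le> N" unfolding N_def using n0 by (intro member_le_sum) auto
  then have N1: "N \<ge> 1" using v0 by simp
  have "(\<Sum>i<n. d i * d i) = (\<Sum>i<n. if i = 0 then 1 else 0)"
    by (intro sum.cong refl) (simp add: d_def)
  then have d1: "(\<Sum>i<n. d i * d i) = 1" using n0 by simp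
  have "(\<Sum>i<n. d i * vr i) = (\<Sum>i<n. if i = 0 then vr i else 0)"
    by (intro sum.cong refl) (simp add: d_def)
  then have d2: "(\<Sum>i<n. d i * vr i) = 1" using n0 v0 by simp
  have vw_r: "(\<Sum>i<n. vr i * wr i) = 0"
  proof -
    have "(\<Sum>i<n. vr i * wr i) = (\<Sum>i<n. d i * vr i) - (\<Sum>i<n. (vr i)^2) / N"
      unfolding wr_def by (simp add: sum_subtractf sum_divide_distrib algebra_simps power2_eq_square)
    then show ?thesis using d2 N1 unfolding N_def by simp
  qed
  have ww_r: "(\<Sum>i<n. (wr i)^2) = 1 - 1 / N"
  proof -
    have "(\<Sum>i<n. (wr i)^2) = (\<Sum>i<n. d i * d i) - 2 / N * (\<Sum>i<n. d i * vr i) + (\<Sum>i<n. (vr i)^2) / N^2"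
      unfolding wr_def by (simp add: power2_diff sum_subtractf sum.distrib sum_divide_distrib sum_distrib_left
          algebra_simps power2_eq_square)
    also have "\<dots> = 1 - 1 / N" using d1 d2 N1 unfolding N_def[symmetric] by (simp add: field_simps power2_eq_square)
    finally show ?thesis .
  qed
  have e0: "(\<lambda>i. if i = 0 then 1 else 0 :: complex) = (\<lambda>i. of_real (1/N) * v i + w i)"
    using N1 by (auto simp: v_def w_def wr_def d_def)
  have vnull: "FF a n v 0 (of_real t) = 1"
    using FF_null[of n a v 0] null n0 v0 by (simp add: v_def)
  have vA: "(\<Sum>i<n. v i * a i j) = 0" if "j < n" for j
  proof -
    have "(\<Sum>i<n. v i * a i j) = (\<Sum>i<n. a j i * of_real (vr i))"
      using sym that by (intro sum.cong refl) (auto simp: v_def mult.commute)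
    then show ?thesis using null[OF that] by simp
  qed
  have vw: "(\<Sum>i<n. v i * w i) = 0"
    using vw_r unfolding v_def w_def by (metis (no_types, lifting) of_real_0 of_real_mult of_real_sum sum.cong)
  have orth: "(\<Sum>i<n. v i * G i) = 0"
    unfolding G_def by (rule FF_orth[OF vA vw])
  have "FF a n w 0 (of_real t) = (\<Sum>i<n. (if i = 0 then 1 else 0) * G i)"
  proof -
    have "(\<Sum>i<n. (if i = 0 then 1 else 0) * G i) = (\<Sum>i<n. if i = 0 then G i else 0)"
      by (intro sum.cong refl) simp
    then show ?thesis using n0 by (simp add: G_def)
  qed
  also have "\<dots> = (\<Sum>i<n. (of_real (1/N) * v i + w i) * G i)"
  proof -
    have e0': "(if i = 0 then 1 else 0 :: complex) = of_real (1/N) * v i + w i" for i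
      using fun_cong[OF e0, of i] by simp
    show ?thesis by (simp only: e0')
  qed
  also have "\<dots> = of_real (1/N) * (\<Sum>i<n. v i * G i) + (\<Sum>i<n. w i * G i)"
    by (simp add: sum.distrib sum_distrib_left algebra_simps)
  finally have Fw: "FF a n w 0 (of_real t) = (\<Sum>i<n. w i * G i)" using orth by simp
  have Ftot: "FF a n (\<lambda>i. if i = 0 then 1 else 0) 0 (of_real t) = of_real (1/N) + (\<Sum>i<n. w i * G i)"
    unfolding e0 using FF_lin[OF n0, of a "of_real (1/N)" v w] vnull Fw by simp
  have GG: "(\<Sum>i<n. (cmod (G i))^2) = (\<Sum>i<n. (cmod (w i))^2)"
  proof -
    have "(\<Sum>i<n. cnj (G i) * G i) = (\<Sum>i<n. cnj (w i) * w i)"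
      unfolding G_def by (rule FF_norm[OF sym re])
    then have "complex_of_real (\<Sum>i<n. (cmod (G i))^2) = complex_of_real (\<Sum>i<n. (cmod (w i))^2)"
    proof -
      have ca: "cnj z * z = complex_of_real ((cmod z)^2)" for z
        by (simp only: complex_norm_square mult.commute)
      show ?thesis using \<open>(\<Sum>i<n. cnj (G i) * G i) = (\<Sum>i<n. cnj (w i) * w i)\<close>
        by (simp only: ca of_real_sum)
    qed
    then show ?thesis using of_real_eq_iff by blast
  qed
  have "cmod (\<Sum>i<n. w i * G i) \<le> (\<Sum>i<n. cmod (w i) * cmod (G i))"
    by (rule order.trans[OF norm_sum]) (simp add: norm_mult)
  also have "\<dots> \<le> (\<Sum>i<n. ((cmod (w i))^2 + (cmod (G i))^2) / 2)"
  proof (rule sum_mono)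
    fix i
    have "0 \<le> (cmod (w i) - cmod (G i))^2" by simp
    then show "cmod (w i) * cmod (G i) \<le> ((cmod (w i))^2 + (cmod (G i))^2) / 2"
      by (simp add: power2_diff)
  qed
  also have "\<dots> = (\<Sum>i<n. (wr i)^2)"
  proof -
    have "(\<Sum>i<n. ((cmod (w i))^2 + (cmod (G i))^2) / 2)
        = ((\<Sum>i<n. (cmod (w i))^2) + (\<Sum>i<n. (cmod (G i))^2)) / 2"
      by (simp only: sum_divide_distrib[symmetric] sum.distrib)
    also have "\<dots> = (\<Sum>i<n. (cmod (w i))^2)" using GG by simp
    also have "\<dots> = (\<Sum>i<n. (wr i)^2)" by (simp add: w_def)
    finally show ?thesis .
  qed
  finally have b: "cmod (\<Sum>i<n. w i * G i) \<le> 1 - 1/N" using ww_r by simp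
  have "1/N - (1 - 1/N) \<le> cmod (complex_of_real (1/N)) - cmod (\<Sum>i<n. w i * G i)"
  proof -
    have "cmod (complex_of_real (1/N)) = 1/N" using N1 by (simp only: norm_of_real) simp
    then show ?thesis using b by simp
  qed
  also have "\<dots> \<le> cmod (of_real (1/N) + (\<Sum>i<n. w i * G i))"
    by (rule norm_diff_ineq)
  finally show ?thesis unfolding Ftot N_def[symmetric] by simp
qed

lemma pow_mat_Suc_left:
  assumes A: "(A :: 'a::semiring_1 mat) \<in> carrier_mat n n"
  shows "A ^\<^sub>m (Suc k) = A * A ^\<^sub>m k"
proof (induction k)
  case 0 then show ?case using A by simp
next
  case (Suc k)
  have "A ^\<^sub>m Suc (Suc k) = (A * A ^\<^sub>m k) * A" using Suc by simp
  also have "\<dots> = A * (A ^\<^sub>m k * A)" using A by (intro assoc_mult_mat) auto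
  finally show ?case by simp
qed

lemma pow_mat_itv:
  assumes A: "(A :: complex mat) \<in> carrier_mat n n" and "i < n" "j < n"
  shows "(A ^\<^sub>m k) $$ (i,j) = itv (\<lambda>i j. A $$ (i,j)) n (\<lambda>l. if l = j then 1 else 0) k i"
  using assms(2)
proof (induction k arbitrary: i)
  case 0 then show ?case using A assms(3) by simp
next
  case (Suc k)
  have "(A ^\<^sub>m Suc k) $$ (i,j) = (A * A ^\<^sub>m k) $$ (i,j)" using pow_mat_Suc_left[OF A] by simp
  also have "\<dots> = (\<Sum>l<n. A $$ (i,l) * (A ^\<^sub>m k) $$ (l,j))"
    using A Suc.prems assms(3) by (simp add: scalar_prod_def atLeast0LessThan)
  also have "\<dots> = (\<Sum>l<n. A $$ (i,l) * itv (\<lambda>i j. A $$ (i,j)) n (\<lambda>l. if l = j then 1 else 0) k l)"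
    using Suc.IH by (intro sum.cong refl) auto
  finally show ?case by simp
qed

definition pw :: "real \<Rightarrow> nat \<Rightarrow> nat \<Rightarrow> real" where
  "pw \<alpha> i j = (if (i = 0 \<and> j = 1) \<or> (i = 1 \<and> j = 0) then 1 / \<alpha>
     else if i + 1 = j \<or> j + 1 = i then 1 else 0)"

definition vr :: "real \<Rightarrow> nat \<Rightarrow> real" where
  "vr \<alpha> i = (if even i then (if i = 0 then 1 else (-1)^(i div 2) / \<alpha>) else 0)"

definition ew :: "real \<Rightarrow> nat \<Rightarrow> real" where
  "ew \<alpha> k = (if k = 0 then 1 / \<alpha> else 1)"

lemma pw_split:
  "pw \<alpha> i j * vr \<alpha> j = (if j = i + 1 then ew \<alpha> i * vr \<alpha> (i+1) else 0)
     + (if 1 \<le> i \<and> j = i - 1 then ew \<alpha> (i-1) * vr \<alpha> (i-1) else 0)"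
  unfolding pw_def ew_def by auto

lemma null_real:
  assumes "odd n" "i < n"
  shows "(\<Sum>j<n. pw \<alpha> i j * vr \<alpha> j) = 0"
proof -
  have "(\<Sum>j<n. pw \<alpha> i j * vr \<alpha> j) = (if i + 1 < n then ew \<alpha> i * vr \<alpha> (i+1) else 0)
     + (if 1 \<le> i then ew \<alpha> (i-1) * vr \<alpha> (i-1) else 0)"
    using assms(2) by (auto simp: pw_split sum.distrib sum.delta')
  also have "\<dots> = 0"
  proof (cases "even i")
    case True
    then show ?thesis by (auto simp: vr_def)
  next
    case False
    then obtain m where m: "i = 2*m+1" using oddE by blast
    obtain k where k: "n = 2*k+1" using assms(1) oddE by blast
    have "i + 1 < n" using assms(2) m k by presburger
    then show ?thesis using m by (auto simp: vr_def ew_def)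
  qed
  finally show ?thesis .
qed

lemma vr_sum: "(\<Sum>i<2*m+1. (vr \<alpha> i)^2) = 1 + real m / \<alpha>^2"
proof (induction m)
  case 0 then show ?case by (simp add: vr_def)
next
  case (Suc m)
  have e: "2 * Suc m + 1 = Suc (Suc (2*m+1))" by simp
  have m1: "((-1::real)^m)^2 = 1" by (simp add: power2_eq_square flip: power_mult_distrib)
  show ?case unfolding e using Suc m1 by (simp add: vr_def power_divide add_divide_distrib)
qed

theorem proposition22:
  fixes n :: nat and \<alpha> :: real
  assumes "n \<ge> 3" and "odd n" and "\<alpha> \<noteq> 0"
    and "\<bar>\<alpha>\<bar> > sqrt ((real n - 1) / 2)"
  shows "sedentary (path_adj n \<alpha>) 0"
proof -
  define A where "A = path_adj n \<alpha>"
  define a where "a i j = A $$ (i,j)" for i j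
  obtain m where nm: "n = 2*m+1" using assms(2) oddE by blast
  have n0: "0 < n" using nm by simp
  have Ac: "A \<in> carrier_mat n n" unfolding A_def path_adj_def by simp
  have aij: "a i j = complex_of_real (pw \<alpha> i j)" if "i < n" "j < n" for i j
    using that unfolding a_def A_def path_adj_def pw_def by auto
  have sym: "a i j = a j i" if "i < n" "j < n" for i j
    using that by (auto simp: aij pw_def)
  have re: "cnj (a i j) = a i j" if "i < n" "j < n" for i j
    using that by (simp add: aij)
  have null: "(\<Sum>j<n. a i j * of_real (vr \<alpha> j)) = 0" if "i < n" for i
  proof -
    have "(\<Sum>j<n. a i j * of_real (vr \<alpha> j)) = of_real (\<Sum>j<n. pw \<alpha> i j * vr \<alpha> j)"
      using that by (simp add: aij of_real_sum)
    then show ?thesis using null_real[OF assms(2) that] by simp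
  qed
  have v0: "vr \<alpha> 0 = 1" by (simp add: vr_def)
  define N where "N = (\<Sum>i<n. (vr \<alpha> i)^2)"
  have N: "N = 1 + real m / \<alpha>^2" unfolding N_def nm by (rule vr_sum)
  have "sqrt (real m) < \<bar>\<alpha>\<bar>" using assms(4) nm by simp
  then have "(sqrt (real m))^2 < \<bar>\<alpha>\<bar>^2" by (intro power_strict_mono) auto
  then have mlt: "real m < \<alpha>^2" by simp
  have a2: "\<alpha>^2 > 0" using assms(3) by simp
  have N1: "N \<ge> 1" using N a2 by simp
  have N2: "N < 2" using N mlt a2 by (simp add: divide_less_eq)
  define C where "C = 2 / N - 1"
  have C0: "0 < C" using N1 N2 by (simp add: C_def field_simps)
  have C1: "C \<le> 1" using N1 by (simp add: C_def field_simps)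
  have bound: "C \<le> cmod (transition A t $$ (0,0))" for t
  proof -
    have "transition A t $$ (0,0) = (\<Sum>k. ((\<i> * complex_of_real t) ^ k / of_nat (fact k)) * (A ^\<^sub>m k) $$ (0,0))"
      using Ac n0 unfolding transition_def by simp
    also have "\<dots> = FF a n (\<lambda>i. if i = 0 then 1 else 0) 0 (of_real t)"
      unfolding FF_def cf_def
    proof (intro suminf_cong)
      fix k
      show "((\<i> * complex_of_real t) ^ k / of_nat (fact k)) * (A ^\<^sub>m k) $$ (0,0)
          = \<i> ^ k / of_nat (fact k) * itv a n (\<lambda>i. if i = 0 then 1 else 0) k 0 * complex_of_real t ^ k"
        using pow_mat_itv[OF Ac n0 n0, of k] unfolding a_def[abs_def]
        by (simp add: power_mult_distrib)
    qed
    finally have "transition A t $$ (0,0) = FF a n (\<lambda>i. if i = 0 then 1 else 0) 0 (of_real t)" .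
    moreover have "2 / N - 1 \<le> cmod (FF a n (\<lambda>i. if i = 0 then 1 else 0) 0 (of_real t))"
      unfolding N_def by (rule key[OF sym re n0 null v0])
    ultimately show ?thesis unfolding C_def by simp
  qed
  have "C \<le> (INF t\<in>{0<..}. cmod (transition A t $$ (0,0)))"
    by (rule cINF_greatest) (auto intro: bound)
  then show ?thesis unfolding sedentary_def A_def using C0 C1 by blast
qed

end
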